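(* Let $\mathbf{f}$ be the Fibonacci word and $\phi=\frac{1+\sqrt5}{2}$. There is a constant $c\le \frac{4}{\sqrt5}\phi\approx 2.89$ such that for every positive integer $k$ and every index $i\ge 0$ of $\mathbf{f}$, there is a $k$-antipower with block length at most $ck$ starting at position $i$ of $\mathbf{f}$.
   Context: The Fibonacci word is $\mathbf{f}=\sigma^{\omega}(0)=0100101001001\cdots$, the fixed point of the morphism $\sigma(0)=01$, $\sigma(1)=0$ (i.e. the infinite word having every $\sigma^n(0)$ as a prefix). Words are indexed from $0$. A $k$-antipower is a word that is the concatenation of $k$ pairwise distinct words (blocks) of equal length; that common length is the block length. *)

theory Defs
  imports Complex_Main
begin

definition fib_morph :: "nat list \<Rightarrow> nat list" where
  "fib_morph w = concat (map (\<lambda>a. if a = 0 then [0, 1] else [0]) w)"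

text \<open>The infinite Fibonacci word f = sigma^omega(0), indexed from 0: the i-th letter is the
  i-th letter of any sigma^n(0) long enough to contain position i.\<close>
definition fib_word :: "nat \<Rightarrow> nat" where
  "fib_word i = (let n = (LEAST n. i < length ((fib_morph ^^ n) [0])) in ((fib_morph ^^ n) [0]) ! i)"

definition factor :: "(nat \<Rightarrow> 'a) \<Rightarrow> nat \<Rightarrow> nat \<Rightarrow> 'a list" where
  "factor x i m = map x [i..<i + m]"

definition is_antipower_at :: "(nat \<Rightarrow> 'a) \<Rightarrow> nat \<Rightarrow> nat \<Rightarrow> nat \<Rightarrow> bool" where
  "is_antipower_at x i k m \<longleftrightarrow>
     (\<forall>a<k. \<forall>b<k. a \<noteq> b \<longrightarrow> factor x (i + a * m) m \<noteq> factor x (i + b * m) m)"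

end

theory Submission
  imports Defs "HOL-Number_Theory.Fib"
begin


definition al :: real where "al = (sqrt 5 - 1) / 2"

lemma al_sq: "al * al = 1 - al"
proof -
  have "sqrt 5 * sqrt 5 = 5" by simp
  then show ?thesis unfolding al_def by (simp add: field_simps)
qed

lemma al_bounds: "1/2 < al" "al < 1" "0 < al"
proof -
  have "2 < sqrt 5" by (rule real_less_rsqrt) simp
  moreover have "sqrt 5 < 3" by (rule real_sqrt_less_iff[THEN iffD2, of 5 9, simplified])
  ultimately show "1/2 < al" "al < 1" "0 < al" unfolding al_def by auto
qed

lemma al_irr:
  assumes "0 < t" shows "real t * al \<noteq> of_int z"
proof
  assume h: "real t * al = of_int z"
  have "al \<in> \<rat>" using h assms
    by (metis Rats_divide Rats_of_int Rats_of_nat nonzero_mult_div_cancel_left of_nat_0_less_iff order_less_irrefl)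
  then obtain m n :: nat where n0: "n \<noteq> 0" and e: "\<bar>al\<bar> = real m / real n" and cp: "coprime m n"
    by (rule Rats_abs_nat_div_natE)
  have "al = real m / real n" using e al_bounds by simp
  hence "real m = al * real n" using n0 by (simp add: field_simps)
  hence "real m * real m + real m * real n = (al * al + al) * (real n * real n)"
    by (simp add: algebra_simps)
  hence "real m * real m + real m * real n = real n * real n"
    using al_sq by simp
  hence eq: "m * m + m * n = n * n" by (metis of_nat_add of_nat_eq_iff of_nat_mult)
  show False
  proof (cases "even m")
    case True
    have "odd n"
    proof
      assume "even n"
      with True have "2 dvd gcd m n" by simp
      with cp show False by (simp add: coprime_iff_gcd_eq_1)
    qed
    then show False using eq True by (metis even_add even_mult_iff)
  next
    case False
    then show False using eq by (metis even_add even_mult_iff)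
  qed
qed

definition cf :: "nat \<Rightarrow> int" where "cf n = \<lfloor>real (Suc n) * al\<rfloor>"
definition sw :: "nat \<Rightarrow> nat" where "sw n = (if cf (Suc n) = cf n then 1 else 0)"

lemma cf_step: "cf (Suc n) = cf n \<or> cf (Suc n) = cf n + 1"
proof -
  have e: "real (Suc (Suc n)) * al = real (Suc n) * al + al" by (simp add: algebra_simps)
  define x where "x = real (Suc n) * al"
  have "\<lfloor>x\<rfloor> \<le> \<lfloor>x + al\<rfloor>" using al_bounds by (intro floor_mono) simp
  moreover have "\<lfloor>x + al\<rfloor> \<le> \<lfloor>x\<rfloor> + 1"
    using al_bounds by (simp add: floor_le_iff) linarith
  ultimately show ?thesis unfolding cf_def e x_def[symmetric] by linarith
qed

lemma cf0: "cf 0 = 0" using al_bounds unfolding cf_def by (simp add: floor_eq_iff)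

lemma cf_nonneg: "cf n \<ge> 0" using al_bounds unfolding cf_def by simp

lemma cf_pos: "n \<ge> 1 \<Longrightarrow> cf n \<ge> 1"
proof -
  assume "n \<ge> 1"
  hence "real (Suc n) \<ge> 2" by simp
  hence h: "real (Suc n) * al \<ge> 2 * al" using al_bounds by (intro mult_right_mono) auto
  have "1 \<le> real (Suc n) * al" using h al_bounds by linarith
  thus ?thesis unfolding cf_def by (simp add: le_floor_iff)
qed

lemma key_bc:
  fixes L :: nat
  defines "g \<equiv> cf L"
  shows "cf (L + nat g) = int L" "cf (Suc (L + nat g)) = int L + 1"
    "sw L = 0 \<Longrightarrow> cf (Suc (Suc (L + nat g))) = int L + 1"
proof -
  define f where "f = real (Suc L) * al - g"
  have g0: "g \<ge> 0" using cf_nonneg g_def by simp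
  have "real (Suc L) * al \<noteq> of_int g" by (rule al_irr) simp
  moreover have "of_int g \<le> real (Suc L) * al" "real (Suc L) * al < of_int g + 1"
    unfolding g_def cf_def by linarith+
  ultimately have f0: "0 < f" "f < 1" unfolding f_def by auto
  have ga: "real (nat g) = of_int g" using g0 by simp
  have E: "real (Suc (L + nat g)) * al = real (Suc L) - f * al"
  proof -
    have "real (Suc (L + nat g)) * al = real (Suc L) * al + of_int g * al" using ga
      by (simp add: algebra_simps)
    also have "\<dots> = real (Suc L) * al + (real (Suc L) * al - f) * al" unfolding f_def by simp
    also have "\<dots> = real (Suc L) * (al + al * al) - f * al" by (simp add: algebra_simps)
    also have "\<dots> = real (Suc L) - f * al" using al_sq by simp
    finally show ?thesis .
  qed
  have "f * al < f * 1" using f0 al_bounds by (intro mult_strict_left_mono) auto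
  hence fa2: "f * al < 1" using f0 by linarith
  have fa: "0 < f * al" "f * al < 1" using f0 al_bounds fa2 by auto
  show "cf (L + nat g) = int L"
  proof -
    have "real (Suc (L + nat g)) * al = real L + (1 - f * al)" using E by simp
    thus ?thesis unfolding cf_def using fa by (simp add: floor_eq_iff)
  qed
  have E2: "real (Suc (Suc (L + nat g))) * al = real (Suc L) + al * (1 - f)"
    using E by (simp add: algebra_simps)
  have "al * (1 - f) < al * 1" using f0 al_bounds by (intro mult_strict_left_mono) auto
  hence "al * (1 - f) < 1" using al_bounds by linarith
  hence "0 < al * (1 - f)" "al * (1 - f) < 1" using f0 al_bounds by auto
  thus "cf (Suc (L + nat g)) = int L + 1" unfolding cf_def using E2 by (simp add: floor_eq_iff)
  assume "sw L = 0"
  hence "cf (Suc L) \<noteq> cf L" unfolding sw_def by (auto split: if_splits)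
  hence c1: "cf (Suc L) = g + 1" using cf_step g_def by auto
  have "real (Suc (Suc L)) * al \<noteq> of_int (g + 1)" by (rule al_irr) simp
  moreover have "of_int (g+1) \<le> real (Suc (Suc L)) * al" using c1 unfolding cf_def by linarith
  ultimately have "of_int (g+1) < real (Suc (Suc L)) * al" by simp
  hence "1 < f + al" unfolding f_def by (simp add: algebra_simps)
  hence "2 - f < 1 + al" by simp
  hence "al * (2 - f) < al * (1 + al)" using al_bounds by simp
  hence lt: "al * (2 - f) < 1" using al_sq by (simp add: algebra_simps)
  have "0 \<le> al * (2 - f)" using f0 al_bounds by simp
  moreover have "real (Suc (Suc (Suc (L + nat g)))) * al = real (Suc L) + al * (2 - f)"
    using E by (simp add: algebra_simps)
  ultimately show "cf (Suc (Suc (L + nat g))) = int L + 1" unfolding cf_def using lt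
    by (simp add: floor_eq_iff)
qed



definition PP :: "nat \<Rightarrow> nat" where "PP L = L + nat (cf L)"

lemma fib_morph_append: "fib_morph (xs @ ys) = fib_morph xs @ fib_morph ys"
  unfolding fib_morph_def by simp

lemma fib_morph_single: "fib_morph [x] = (if x = 0 then [0, 1] else [0])"
  unfolding fib_morph_def by simp

lemma sw_PP: "sw (PP L) = 0" "sw L = 0 \<Longrightarrow> sw (Suc (PP L)) = 1"
  using key_bc[of L] unfolding sw_def PP_def by auto

lemma morph_prefix: "fib_morph (map sw [0..<L]) = map sw [0..<PP L]"
proof (induction L)
  case 0
  then show ?case by (simp add: PP_def cf0 fib_morph_def)
next
  case (Suc L)
  have "fib_morph (map sw [0..<Suc L]) = map sw [0..<PP L] @ fib_morph [sw L]"
    using Suc by (simp add: fib_morph_append)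
  also have "\<dots> = map sw [0..<PP (Suc L)]"
  proof (cases "sw L = 0")
    case True
    hence "cf (Suc L) = cf L + 1" using cf_step[of L] unfolding sw_def by (auto split: if_splits)
    hence "PP (Suc L) = Suc (Suc (PP L))" unfolding PP_def using cf_nonneg[of L] by simp
    thus ?thesis using True sw_PP[of L] by (simp add: fib_morph_single)
  next
    case False
    hence "cf (Suc L) = cf L" unfolding sw_def by (auto split: if_splits)
    hence "PP (Suc L) = Suc (PP L)" unfolding PP_def by simp
    thus ?thesis using False sw_PP[of L] by (simp add: fib_morph_single)
  qed
  finally show ?case .
qed

lemma sw0: "sw 0 = 0"
proof -
  have "cf 1 = 1" using al_bounds unfolding cf_def by (simp add: floor_eq_iff)
  thus ?thesis unfolding sw_def by (simp add: cf0)
qed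

lemma iter_prefix: "(fib_morph ^^ n) [0] = map sw [0..<(PP ^^ n) 1]"
proof (induction n)
  case 0
  then show ?case by (simp add: sw0)
next
  case (Suc n)
  then show ?case by (simp add: morph_prefix)
qed

lemma PP_ge: "L \<ge> 1 \<Longrightarrow> PP L \<ge> Suc L"
  using cf_pos[of L] unfolding PP_def by simp

lemma iter_len: "(PP ^^ n) 1 \<ge> Suc n"
proof (induction n)
  case 0 then show ?case by simp
next
  case (Suc n)
  then show ?case using PP_ge[of "(PP ^^ n) 1"] by simp
qed

lemma fib_word_sw: "fib_word i = sw i"
proof -
  define n where "n = (LEAST n. i < length ((fib_morph ^^ n) [0]))"
  have ex: "i < length ((fib_morph ^^ i) [0])" using iter_len[of i] by (simp add: iter_prefix)
  have "i < length ((fib_morph ^^ n) [0])" unfolding n_def by (rule LeastI[where P="\<lambda>n. i < length ((fib_morph ^^ n) [0])", OF ex])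
  hence "((fib_morph ^^ n) [0]) ! i = sw i" by (simp add: iter_prefix)
  thus ?thesis unfolding fib_word_def n_def[symmetric] by simp
qed



lemma fibE: "real (fib (Suc n)) * al - real (fib n) = - ((- al) ^ Suc n)"
proof -
  have "(real (fib (Suc n)) * al - real (fib n) = - ((- al) ^ Suc n)) \<and>
        (real (fib (Suc (Suc n))) * al - real (fib (Suc n)) = - ((- al) ^ Suc (Suc n)))"
  proof (induction n)
    case 0
    then show ?case using al_sq by simp
  next
    case (Suc n)
    have "real (fib (Suc (Suc (Suc n)))) * al - real (fib (Suc (Suc n)))
       = (real (fib (Suc (Suc n))) * al - real (fib (Suc n))) + (real (fib (Suc n)) * al - real (fib n))"
      by (simp add: algebra_simps)
    also have "\<dots> = - ((- al) ^ Suc (Suc n)) - ((- al) ^ Suc n)" using Suc by simp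
    also have "\<dots> = - ((- al) ^ Suc n) * (1 - al)" by (simp add: algebra_simps)
    also have "\<dots> = - ((- al) ^ Suc n) * (al * al)" using al_sq by simp
    also have "\<dots> = - ((- al) ^ Suc (Suc (Suc n)))" by (simp add: algebra_simps)
    finally show ?case using Suc by simp
  qed
  thus ?thesis by simp
qed

lemma cover:
  fixes x :: real
  shows "\<exists>t < fib (Suc (Suc n)). \<exists>N::int. x < of_int N - real t * al \<and> of_int N - real t * al \<le> x + al ^ n"
proof (induction n)
  case 0
  have "x < of_int (\<lfloor>x\<rfloor> + 1) - real 0 * al" "of_int (\<lfloor>x\<rfloor> + 1) - real 0 * al \<le> x + al ^ 0"
    by simp_all
  moreover have "0 < fib (Suc (Suc 0))" by simp
  ultimately show ?case by blast
next
  case (Suc n)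
  then obtain t0 N0 where t0: "t0 < fib (Suc (Suc n))" and
    g1: "x < of_int N0 - real t0 * al" and g2: "of_int N0 - real t0 * al \<le> x + al ^ n" by blast
  define g0 where "g0 = of_int N0 - real t0 * al - x"
  have g0p: "0 < g0" "g0 \<le> al ^ n" using g1 g2 unfolding g0_def by auto
  have an1: "al ^ Suc n = al * al ^ n" by simp
  have "al ^ Suc (Suc n) = (al * al) * al ^ n" by simp
  hence an2: "al ^ Suc (Suc n) = (1 - al) * al ^ n" using al_sq by simp
  note an = an1 an2
  have apos: "0 < al ^ n" using al_bounds by simp
  have "1 * al ^ n \<le> (2 * al) * al ^ n" using al_bounds apos by (intro mult_right_mono) auto
  hence twice: "al ^ n \<le> 2 * al ^ Suc n" by simp
  have fS: "fib (Suc (Suc (Suc n))) = fib (Suc (Suc n)) + fib (Suc n)" by simp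
  show ?case
  proof (cases "g0 \<le> al ^ Suc n")
    case True
    then show ?thesis using t0 g0p fS unfolding g0_def
      by (intro exI[of _ t0] conjI exI[of _ N0]) auto
  next
    case False
    hence gl: "al ^ Suc n < g0" by simp
    show ?thesis
    proof (cases "even n")
      case True
      have e1: "real (fib (Suc n)) * al - real (fib n) = al ^ Suc n"
        using fibE[of n] True by simp
      define t where "t = t0 + fib (Suc n)"
      define N where "N = N0 + int (fib n)"
      have "of_int N - real t * al - x = g0 - al ^ Suc n"
        using e1 unfolding t_def N_def g0_def by (simp add: algebra_simps)
      moreover have "g0 - al ^ Suc n \<le> al ^ Suc n"
        using g0p twice by linarith
      ultimately show ?thesis using gl t0 fS
        by (intro exI[of _ t] conjI exI[of _ N]) (auto simp: t_def)
    next
      case False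
      have e1: "real (fib (Suc n)) * al - real (fib n) = - (al ^ Suc n)"
        using fibE[of n] False by simp
      have e2: "real (fib (Suc (Suc n))) * al - real (fib (Suc n)) = al ^ Suc (Suc n)"
        using fibE[of "Suc n"] False by simp
      show ?thesis
      proof (cases "fib (Suc n) \<le> t0")
        case True
        define t where "t = t0 - fib (Suc n)"
        define N where "N = N0 - int (fib n)"
        have tt: "real t = real t0 - real (fib (Suc n))" using True unfolding t_def by simp
        have tt2: "real t0 * al = real t * al + real (fib (Suc n)) * al" unfolding tt by (simp add: algebra_simps)
        have "of_int N - real t * al - x = g0 - al ^ Suc n"
          using e1 tt2 unfolding N_def g0_def by simp
        moreover have "g0 - al ^ Suc n \<le> al ^ Suc n"
          using g0p twice by linarith
        moreover have "t < fib (Suc (Suc (Suc n)))" using t0 fS unfolding t_def by simp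
        ultimately show ?thesis using gl
          by (intro exI[of _ t] conjI exI[of _ N]) auto
      next
        case False
        define t where "t = t0 + fib (Suc (Suc n))"
        define N where "N = N0 + int (fib (Suc n))"
        have "of_int N - real t * al - x = g0 - al ^ Suc (Suc n)"
          using e2 unfolding t_def N_def g0_def by (simp add: algebra_simps)
        moreover have "g0 - al ^ Suc (Suc n) \<le> al ^ Suc n"
          using g0p an by (simp add: algebra_simps)
        moreover have "0 < g0 - al ^ Suc (Suc n)"
          using gl power_strict_decreasing[of "Suc n" "Suc (Suc n)" al] al_bounds by linarith
        moreover have "t < fib (Suc (Suc (Suc n)))" using False fS unfolding t_def by simp
        ultimately show ?thesis
          by (intro exI[of _ t] conjI exI[of _ N]) auto
      qed
    qed
  qed
qed



lemma sep:
  fixes X eps :: real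
  assumes h1: "al ^ n \<le> \<bar>eps\<bar>" and h2: "\<bar>eps\<bar> \<le> 1 - al ^ n"
  shows "\<exists>t < fib (Suc (Suc n)). \<lfloor>X + real t * al\<rfloor> - \<lfloor>X\<rfloor> \<noteq> \<lfloor>X + eps + real t * al\<rfloor> - \<lfloor>X + eps\<rfloor>"
proof -
  define x where "x = X - of_int \<lfloor>X\<rfloor>"
  define y where "y = X + eps - of_int \<lfloor>X + eps\<rfloor>"
  have fx: "\<lfloor>X + r\<rfloor> - \<lfloor>X\<rfloor> = \<lfloor>x + r\<rfloor>" for r
  proof -
    have "x + r = (X + r) - of_int \<lfloor>X\<rfloor>" unfolding x_def by simp
    thus ?thesis by (simp only: floor_diff_of_int)
  qed
  have fy: "\<lfloor>X + eps + r\<rfloor> - \<lfloor>X + eps\<rfloor> = \<lfloor>y + r\<rfloor>" for r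
  proof -
    have "y + r = (X + eps + r) - of_int \<lfloor>X + eps\<rfloor>" unfolding y_def by simp
    thus ?thesis by (simp only: floor_diff_of_int)
  qed
  have xb: "0 \<le> x" "x < 1" unfolding x_def by linarith+
  have yb: "0 \<le> y" "y < 1" unfolding y_def by linarith+
  define z where "z = \<lfloor>X\<rfloor> - \<lfloor>X + eps\<rfloor>"
  have yx: "y - x = eps + of_int z" unfolding x_def y_def z_def by simp
  have apos: "0 < al ^ n" using al_bounds by simp
  have dist: "al ^ n \<le> \<bar>y - x\<bar>"
  proof (cases "z = 0")
    case True then show ?thesis using yx h1 by simp
  next
    case False
    then consider "z \<ge> 1" | "z \<le> -1" by linarith
    then show ?thesis
    proof cases
      case 1
      hence "y - x \<ge> eps + 1" using yx by simp
      thus ?thesis using h2 by linarith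
    next
      case 2
      hence "y - x \<le> eps - 1" using yx by simp
      thus ?thesis using h2 by linarith
    qed
  qed
  have key: "\<exists>t < fib (Suc (Suc n)). \<lfloor>lo + real t * al\<rfloor> \<noteq> \<lfloor>hi + real t * al\<rfloor>"
    if "lo + al ^ n \<le> hi" for lo hi :: real
  proof -
    obtain t N where t: "t < fib (Suc (Suc n))" and
      n1: "lo < of_int N - real t * al" and n2: "of_int N - real t * al \<le> lo + al ^ n"
      using cover[where x=lo and n=n] by blast
    have "\<lfloor>lo + real t * al\<rfloor> < N" using n1 by (simp add: floor_less_iff)
    moreover have "N \<le> \<lfloor>hi + real t * al\<rfloor>" using n2 that by (simp add: le_floor_iff)
    ultimately show ?thesis using t by (intro exI[of _ t]) auto
  qed
  show ?thesis
  proof (cases "x \<le> y")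
    case True
    hence "x + al ^ n \<le> y" using dist by simp
    then obtain t where "t < fib (Suc (Suc n))" "\<lfloor>x + real t * al\<rfloor> \<noteq> \<lfloor>y + real t * al\<rfloor>"
      using key by blast
    thus ?thesis using fx fy by metis
  next
    case False
    hence "y + al ^ n \<le> x" using dist by simp
    then obtain t where "t < fib (Suc (Suc n))" "\<lfloor>y + real t * al\<rfloor> \<noteq> \<lfloor>x + real t * al\<rfloor>"
      using key by blast
    thus ?thesis using fx fy by metis
  qed
qed

lemma cf_diff: "cf (Suc n) = cf n + (1 - int (sw n))"
  using cf_step[of n] unfolding sw_def by auto

lemma tele:
  assumes "\<forall>j<m. sw (p + j) = sw (q + j)"
  shows "t \<le> m \<Longrightarrow> cf (p + t) - cf p = cf (q + t) - cf q"
proof (induction t)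
  case 0 then show ?case by simp
next
  case (Suc t)
  hence "sw (p + t) = sw (q + t)" using assms by simp
  then show ?case using Suc cf_diff[of "p + t"] cf_diff[of "q + t"] by simp
qed



lemma fibH: "real (fib (Suc n)) * al ^ n * (2 - al) = 1 - (- (al * al)) ^ Suc n"
proof -
  define r where "r = - (al * al)"
  have ra: "al * r + al * al = r * r"
  proof -
    have "al * r + al * al = al * al * (1 - al)" unfolding r_def by (simp add: algebra_simps)
    also have "\<dots> = (al * al) * (al * al)" using al_sq by simp
    finally show ?thesis unfolding r_def by simp
  qed
  have "real (fib (Suc n)) * al ^ n * (2 - al) = 1 - r ^ Suc n \<and>
        real (fib (Suc (Suc n))) * al ^ Suc n * (2 - al) = 1 - r ^ Suc (Suc n)"
  proof (induction n)
    case 0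
    have "al * (2 - al) = 1 - r * r"
    proof -
      have "r * r = (al * al) * (al * al)" unfolding r_def by simp
      also have "\<dots> = (1 - al) * (1 - al)" using al_sq by simp
      finally have "r * r = (1 - al) * (1 - al)" .
      thus ?thesis using al_sq by (simp add: algebra_simps)
    qed
    hence B: "real (fib (Suc (Suc 0))) * al ^ Suc 0 * (2 - al) = 1 - r ^ Suc (Suc 0)" by simp
    have "2 - al = 1 + al * al" using al_sq by simp
    hence A: "real (fib (Suc 0)) * al ^ 0 * (2 - al) = 1 - r ^ Suc 0" unfolding r_def by simp
    show ?case using A B by simp
  next
    case (Suc n)
    have "real (fib (Suc (Suc (Suc n)))) * al ^ Suc (Suc n) * (2 - al)
      = al * (real (fib (Suc (Suc n))) * al ^ Suc n * (2 - al))
        + (al * al) * (real (fib (Suc n)) * al ^ n * (2 - al))"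
      by (simp add: algebra_simps)
    also have "\<dots> = al * (1 - r ^ Suc (Suc n)) + (al * al) * (1 - r ^ Suc n)" using Suc by simp
    also have "\<dots> = (al + al * al) - r ^ Suc n * (al * r + al * al)" by (simp add: algebra_simps)
    also have "\<dots> = 1 - r ^ Suc (Suc (Suc n))" using al_sq ra by (simp add: algebra_simps)
    finally show ?case using Suc by simp
  qed
  thus ?thesis unfolding r_def by simp
qed

lemma block_distinct:
  assumes Cn: "2 * (real k - 1) * al ^ Suc n + al ^ n \<le> 1"
    and ab: "a < b" "b < k" and m: "m = 2 * fib (Suc n)"
  shows "factor fib_word (i + a * m) m \<noteq> factor fib_word (i + b * m) m"
proof
  define p where "p = i + a * m"
  define q where "q = i + b * m"
  define d where "d = b - a"
  assume "factor fib_word (i + a * m) m = factor fib_word (i + b * m) m"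
  hence eqm: "map fib_word [p..<p + m] = map fib_word [q..<q + m]"
    unfolding factor_def p_def q_def by simp
  have sweq: "\<forall>j<m. sw (p + j) = sw (q + j)"
  proof (intro allI impI)
    fix j assume "j < m"
    hence "map fib_word [p..<p + m] ! j = fib_word (p + j)" "map fib_word [q..<q + m] ! j = fib_word (q + j)"
      by simp_all
    thus "sw (p + j) = sw (q + j)" using eqm by (simp add: fib_word_sw)
  qed
  have fibm: "fib (Suc (Suc n)) \<le> m" unfolding m
    using fib_mono[of n "Suc n"] by simp
  define X where "X = real (Suc p) * al"
  define eps where "eps = 2 * real d * (real (fib (Suc n)) * al - real (fib n))"
  have d1: "1 \<le> d" "d + 1 \<le> k" using ab unfolding d_def by auto
  have qd: "q = p + d * m" unfolding p_def q_def d_def using ab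
    by (simp add: algebra_simps)
  have Y: "real (Suc q) * al + real t * al = X + eps + real t * al + of_int (int (2 * d * fib n))" for t
    unfolding X_def eps_def qd m by (simp add: algebra_simps)
  have Y0: "real (Suc q) * al = X + eps + of_int (int (2 * d * fib n))"
    unfolding X_def eps_def qd m by (simp add: algebra_simps)
  have abs_eps: "\<bar>eps\<bar> = 2 * real d * al ^ Suc n"
    unfolding eps_def fibE using al_bounds by (simp add: abs_mult power_abs)
  have twice: "al ^ n \<le> 2 * al ^ Suc n"
  proof -
    have "1 * al ^ n \<le> (2 * al) * al ^ n" using al_bounds by (intro mult_right_mono) auto
    thus ?thesis by simp
  qed
  have h1: "al ^ n \<le> \<bar>eps\<bar>"
  proof -
    have "2 * al ^ Suc n \<le> 2 * real d * al ^ Suc n" using d1 al_bounds by simp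
    thus ?thesis using twice abs_eps by linarith
  qed
  have h2: "\<bar>eps\<bar> \<le> 1 - al ^ n"
  proof -
    have "real d \<le> real k - 1" using d1 by simp
    hence "2 * real d * al ^ Suc n \<le> 2 * (real k - 1) * al ^ Suc n" using al_bounds by simp
    thus ?thesis using Cn abs_eps by linarith
  qed
  obtain t where t: "t < fib (Suc (Suc n))"
    and ne: "\<lfloor>X + real t * al\<rfloor> - \<lfloor>X\<rfloor> \<noteq> \<lfloor>X + eps + real t * al\<rfloor> - \<lfloor>X + eps\<rfloor>"
    using sep[OF h1 h2, of X] by blast
  have "cf (p + t) - cf p = cf (q + t) - cf q" using tele[OF sweq] t fibm by simp
  moreover have "cf (p + t) = \<lfloor>X + real t * al\<rfloor>" "cf p = \<lfloor>X\<rfloor>"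
    unfolding cf_def X_def by (simp_all add: algebra_simps)
  moreover have "cf (q + t) = \<lfloor>X + eps + real t * al\<rfloor> + int (2 * d * fib n)"
  proof -
    have "real (Suc (q + t)) * al = real (Suc q) * al + real t * al" by (simp add: algebra_simps)
    thus ?thesis unfolding cf_def Y by (simp only: floor_add_int)
  qed
  moreover have "cf q = \<lfloor>X + eps\<rfloor> + int (2 * d * fib n)"
    unfolding cf_def Y0 by (simp only: floor_add_int)
  ultimately show False using ne by simp
qed



lemma c_eq: "4 / sqrt 5 * ((1 + sqrt 5) / 2) * (2 - al) = 4"
proof -
  have s5: "sqrt 5 * sqrt 5 = 5" by simp
  have "sqrt 5 > 0" by simp
  thus ?thesis unfolding al_def using s5 by (simp add: field_simps)
qed

lemma bound:
  assumes k: "k > 0" and fail: "\<not> (2 * (real k - 1) * al ^ Suc n + al ^ n \<le> 1)"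
  shows "real (fib (Suc (Suc n))) * (2 - al) \<le> 2 * real k"
proof -
  define A where "A = al ^ n"
  have Apos: "0 < A" unfolding A_def using al_bounds by simp
  have f1: "2 * real k * (al * A) > 1 - A + 2 * (al * A)"
    using fail unfolding A_def by (simp add: algebra_simps)
  have H: "real (fib (Suc (Suc n))) * (2 - al) * (al * A) = 1 - (- (al * al)) ^ Suc (Suc n)"
    using fibH[of "Suc n"] unfolding A_def by (simp add: algebra_simps)
  have "- ((- (al * al)) ^ Suc (Suc n)) \<le> \<bar>(- (al * al)) ^ Suc (Suc n)\<bar>" by simp
  also have "\<dots> = \<bar>- (al * al)\<bar> ^ Suc (Suc n)" by (rule power_abs)
  also have "\<dots> = (al * al) ^ Suc (Suc n)" by simp
  also have "\<dots> = al ^ Suc (Suc n) * al ^ Suc (Suc n)" by (rule power_mult_distrib)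
  also have "\<dots> = al ^ (Suc (Suc n) + Suc (Suc n))" by (simp only: power_add)
  also have "\<dots> = al ^ (n + (n + 4))" by (rule arg_cong[where f="\<lambda>j. al ^ j"]) simp
  also have "\<dots> = al ^ n * al ^ (n + 4)" by (rule power_add)
  also have "\<dots> \<le> al ^ n * al ^ 3"
  proof -
    have "al ^ (n + 4) \<le> al ^ 3" using al_bounds by (intro power_decreasing) auto
    thus ?thesis using al_bounds by (intro mult_left_mono) auto
  qed
  also have "al ^ 3 = 2 * al - 1"
  proof -
    have "al ^ 3 = al * (al * al)" by (simp add: power3_eq_cube)
    also have "\<dots> = al * (1 - al)" using al_sq by simp
    also have "\<dots> = al - al * al" by (simp add: algebra_simps)
    also have "\<dots> = 2 * al - 1" using al_sq by simp
    finally show ?thesis .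
  qed
  finally have "- ((- (al * al)) ^ Suc (Suc n)) \<le> A * (2 * al - 1)" unfolding A_def .
  hence "real (fib (Suc (Suc n))) * (2 - al) * (al * A) \<le> 2 * real k * (al * A)"
    using H f1 by (simp add: algebra_simps)
  moreover have "0 < al * A" using Apos al_bounds by simp
  ultimately show ?thesis by (rule mult_right_le_imp_le)
qed

lemma scale:
  fixes x c :: real
  assumes "x * (2 - al) \<le> 4 * real k" "c * (2 - al) = 4"
  shows "x \<le> c * real k"
proof -
  have "(c * real k) * (2 - al) = real k * (c * (2 - al))" by (simp add: algebra_simps)
  also have "\<dots> = 4 * real k" using assms(2) by simp
  finally have E: "(c * real k) * (2 - al) = 4 * real k" .
  have "x * (2 - al) \<le> (c * real k) * (2 - al)" using assms(1) E by linarith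
  moreover have "0 < 2 - al" using al_bounds by simp
  ultimately show ?thesis by (rule mult_right_le_imp_le)
qed

theorem theorem6:
  "\<exists>c::real. c \<le> 4 / sqrt 5 * ((1 + sqrt 5) / 2) \<and>
     (\<forall>k::nat. k > 0 \<longrightarrow> (\<forall>i::nat. \<exists>m::nat. m > 0 \<and> real m \<le> c * real k \<and>
        is_antipower_at fib_word i k m))"
proof (intro exI[of _ "4 / sqrt 5 * ((1 + sqrt 5) / 2)"] conjI order_refl allI impI)
  define c where "c = 4 / sqrt 5 * ((1 + sqrt 5) / 2)"
  fix k i :: nat assume k: "k > 0"
  define Cn where "Cn n \<longleftrightarrow> 2 * (real k - 1) * al ^ Suc n + al ^ n \<le> 1" for n
  have exn: "\<exists>n. Cn n"
  proof -
    have "0 < 1 / (2 * real k)" using k by simp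
    then obtain n where n: "al ^ n < 1 / (2 * real k)" using real_arch_pow_inv[of "1 / (2 * real k)" al] al_bounds by auto
    have "al ^ Suc n \<le> al ^ n" using al_bounds by (intro power_decreasing) auto
    hence "2 * (real k - 1) * al ^ Suc n \<le> 2 * (real k - 1) * al ^ n" using k by (intro mult_left_mono) auto
    moreover have "2 * real k * al ^ n < 1" using n k by (simp add: field_simps)
    moreover have "2 * (real k - 1) * al ^ n + al ^ n = 2 * real k * al ^ n - al ^ n" by (simp add: algebra_simps)
    moreover have "0 < al ^ n" using al_bounds by simp
    ultimately have "Cn n" unfolding Cn_def by linarith
    thus ?thesis by blast
  qed
  define n where "n = (LEAST n. Cn n)"
  have Cnn: "Cn n" unfolding n_def using exn by (rule LeastI_ex)
  define m where "m = 2 * fib (Suc n)"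
  have cpos: "c * (2 - al) = 4" unfolding c_def by (rule c_eq)
  have al2: "0 < 2 - al" using al_bounds by simp
  have "real m \<le> c * real k"
  proof (cases n)
    case 0
    have "real m * (2 - al) \<le> 4 * real k" unfolding m_def 0 using al_bounds k by simp
    thus ?thesis using cpos by (rule scale)
  next
    case (Suc n')
    have "\<not> Cn n'" unfolding n_def using Suc not_less_Least[of n' Cn] n_def by auto
    hence "real (fib (Suc (Suc n'))) * (2 - al) \<le> 2 * real k" using bound[OF k] unfolding Cn_def by blast
    moreover have "real m * (2 - al) = 2 * (real (fib (Suc (Suc n'))) * (2 - al))"
      unfolding m_def Suc by (simp add: algebra_simps)
    ultimately have "real m * (2 - al) \<le> 4 * real k" by linarith
    thus ?thesis using cpos by (rule scale)
  qed
  moreover have "m > 0" unfolding m_def by (simp add: fib_neq_0_nat)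
  moreover have "is_antipower_at fib_word i k m"
    unfolding is_antipower_at_def
  proof (intro allI impI)
    fix a b assume "a < k" "b < k" "a \<noteq> b"
    then consider "a < b" | "b < a" by linarith
    then show "factor fib_word (i + a * m) m \<noteq> factor fib_word (i + b * m) m"
    proof cases
      case 1 then show ?thesis using block_distinct[of k n a b m i] Cnn \<open>b < k\<close> m_def unfolding Cn_def by blast
    next
      case 2 then show ?thesis using block_distinct[of k n b a m i] Cnn \<open>a < k\<close> m_def unfolding Cn_def by metis
    qed
  qed
  ultimately show "\<exists>m>0. real m \<le> 4 / sqrt 5 * ((1 + sqrt 5) / 2) * real k \<and> is_antipower_at fib_word i k m"
    unfolding c_def by blast
qed


end
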